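(* Consider the class of three-valued logics (as defined in the context) that are paraconsistent and have properties (a) and (b). There is exactly one logic in this class whose logical equivalence relation $\equiv$ satisfies, for all formulas $A,B,C$, all of the following: (1) $A\wedge\bot \equiv \bot$; (2) $A\vee\top\equiv\top$; (3) $A\wedge\top\equiv A$; (4) $A\vee\bot\equiv A$; (5) $A\wedge A\equiv A$; (6) $A\vee A\equiv A$; (7) $A\wedge B\equiv B\wedge A$; (8) $A\vee B\equiv B\vee A$; (9) $\neg\neg A\equiv A$; (10) $(A\vee\neg A)\to B\equiv B$; (11) $(A\to B)\wedge(A\to C)\equiv A\to(B\wedge C)$; (12) $(A\to C)\wedge(B\to C)\equiv (A\vee B)\to C$.
   Context: Formulas are built from a countably infinite set of propositional variables, the constant $\bot$, the unary connective $\neg$ and the binary connectives $\wedge,\vee,\to$; $\top$ abbreviates $\neg\bot$. Let $V=\{t,f,b\}$. A three-valued logic is specified by truth functions $\neg^M:V\to V$ and $\wedge^M,\vee^M,\to^M:V^2\to V$ that agree with the classical truth functions of negation, conjunction, disjunction and material implication on $\{t,f\}$, with $\bot$ interpreted as $f$; two logics are different iff at least one of these truth functions differs. A valuation is a map $\nu$ from formulas to $V$ with $\nu(\bot)=f$, $\nu(\neg A)=\neg^M(\nu(A))$, $\nu(A\wedge B)=\wedge^M(\nu(A),\nu(B))$, and similarly for $\vee,\to$ (values on propositional variables are arbitrary). The designated values are $t$ and $b$: $\Gamma\models A$ iff for every valuation $\nu$, either $\nu(A')=f$ for some $A'\in\Gamma$ or $\nu(A)\in\{t,b\}$. The logic is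 paraconsistent if there are formulas $A,B$ with $\{A,\neg A\}\not\models B$. Its logical equivalence relation is: $A\equiv B$ iff $\nu(A)=\nu(B)$ for every valuation $\nu$. Property (a): for every set of formulas $\Gamma$ and formula $A$, $\Gamma\models A$ implies $\Gamma\models_{\mathrm{CPL}}A$, where $\models_{\mathrm{CPL}}$ is the consequence relation of classical propositional logic (with $\bot$ false, $\to$ material implication). Property (b): for all sets $\Gamma$ and formulas $A,B,C$: (b1) $\Gamma\cup\{A\}\models B$ iff $\Gamma\models A\to B$; (b2) $\Gamma\models A\wedge B$ iff $\Gamma\models A$ and $\Gamma\models B$; (b3) $\Gamma\cup\{A\vee B\}\models C$ iff $\Gamma\cup\{A\}\models C$ and $\Gamma\cup\{B\}\models C$. (Under these conventions there are exactly 8192 such paraconsistent logics with properties (a) and (b).) *)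

theory Defs
  imports Main
begin

datatype tv = T | F | B

datatype fm = Var nat | Bot | Neg fm | Conj fm fm | Disj fm fm | Imp fm fm

definition Top :: fm where "Top = Neg Bot"

text \<open>A three-valued logic is given by its four truth functions (negation, conjunction,
disjunction, implication). Two logics are equal iff all four functions coincide.\<close>
type_synonym logic = "(tv \<Rightarrow> tv) \<times> (tv \<Rightarrow> tv \<Rightarrow> tv) \<times> (tv \<Rightarrow> tv \<Rightarrow> tv) \<times> (tv \<Rightarrow> tv \<Rightarrow> tv)"

definition classical_tv :: "bool \<Rightarrow> tv" where
  "classical_tv b = (if b then T else F)"

definition agrees_classical :: "logic \<Rightarrow> bool" where
  "agrees_classical L = (case L of (ng, cj, dj, im) \<Rightarrow>
     (\<forall>p q. ng (classical_tv p) = classical_tv (\<not> p)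
        \<and> cj (classical_tv p) (classical_tv q) = classical_tv (p \<and> q)
        \<and> dj (classical_tv p) (classical_tv q) = classical_tv (p \<or> q)
        \<and> im (classical_tv p) (classical_tv q) = classical_tv (p \<longrightarrow> q)))"

fun eval :: "logic \<Rightarrow> (nat \<Rightarrow> tv) \<Rightarrow> fm \<Rightarrow> tv" where
  "eval L v (Var n) = v n"
| "eval L v Bot = F"
| "eval L v (Neg A) = fst L (eval L v A)"
| "eval L v (Conj A C) = fst (snd L) (eval L v A) (eval L v C)"
| "eval L v (Disj A C) = fst (snd (snd L)) (eval L v A) (eval L v C)"
| "eval L v (Imp A C) = snd (snd (snd L)) (eval L v A) (eval L v C)"

definition designated :: "tv \<Rightarrow> bool" where
  "designated x = (x = T \<or> x = B)"

definition cons :: "logic \<Rightarrow> fm set \<Rightarrow> fm \<Rightarrow> bool" where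
  "cons L \<Gamma> A = (\<forall>v. (\<exists>A'\<in>\<Gamma>. eval L v A' = F) \<or> designated (eval L v A))"

fun ceval :: "(nat \<Rightarrow> bool) \<Rightarrow> fm \<Rightarrow> bool" where
  "ceval w (Var n) = w n"
| "ceval w Bot = False"
| "ceval w (Neg A) = (\<not> ceval w A)"
| "ceval w (Conj A C) = (ceval w A \<and> ceval w C)"
| "ceval w (Disj A C) = (ceval w A \<or> ceval w C)"
| "ceval w (Imp A C) = (ceval w A \<longrightarrow> ceval w C)"

definition cpl_cons :: "fm set \<Rightarrow> fm \<Rightarrow> bool" where
  "cpl_cons \<Gamma> A = (\<forall>w. (\<forall>A'\<in>\<Gamma>. ceval w A') \<longrightarrow> ceval w A)"

definition paraconsistent :: "logic \<Rightarrow> bool" where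
  "paraconsistent L = (\<exists>A C. \<not> cons L {A, Neg A} C)"

definition prop_a :: "logic \<Rightarrow> bool" where
  "prop_a L = (\<forall>\<Gamma> A. cons L \<Gamma> A \<longrightarrow> cpl_cons \<Gamma> A)"

definition prop_b :: "logic \<Rightarrow> bool" where
  "prop_b L = (\<forall>\<Gamma> A C D.
      (cons L (\<Gamma> \<union> {A}) C \<longleftrightarrow> cons L \<Gamma> (Imp A C))
    \<and> (cons L \<Gamma> (Conj A C) \<longleftrightarrow> cons L \<Gamma> A \<and> cons L \<Gamma> C)
    \<and> (cons L (\<Gamma> \<union> {Disj A C}) D \<longleftrightarrow> cons L (\<Gamma> \<union> {A}) D \<and> cons L (\<Gamma> \<union> {C}) D))"

definition equiv_fm :: "logic \<Rightarrow> fm \<Rightarrow> fm \<Rightarrow> bool" where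
  "equiv_fm L A C = (\<forall>v. eval L v A = eval L v C)"

definition in_class :: "logic \<Rightarrow> bool" where
  "in_class L = (agrees_classical L \<and> paraconsistent L \<and> prop_a L \<and> prop_b L)"

definition equiv_laws :: "logic \<Rightarrow> bool" where
  "equiv_laws L = (\<forall>A C D.
      equiv_fm L (Conj A Bot) Bot
    \<and> equiv_fm L (Disj A Top) Top
    \<and> equiv_fm L (Conj A Top) A
    \<and> equiv_fm L (Disj A Bot) A
    \<and> equiv_fm L (Conj A A) A
    \<and> equiv_fm L (Disj A A) A
    \<and> equiv_fm L (Conj A C) (Conj C A)
    \<and> equiv_fm L (Disj A C) (Disj C A)
    \<and> equiv_fm L (Neg (Neg A)) A
    \<and> equiv_fm L (Imp (Disj A (Neg A)) C) C
    \<and> equiv_fm L (Conj (Imp A C) (Imp A D)) (Imp A (Conj C D))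
    \<and> equiv_fm L (Conj (Imp A D) (Imp C D)) (Imp (Disj A C) D))"

end

theory Submission
  imports Defs
begin

fun ng0 :: "tv \<Rightarrow> tv" where
  "ng0 T = F" | "ng0 F = T" | "ng0 B = B"

fun cj0 :: "tv \<Rightarrow> tv \<Rightarrow> tv" where
  "cj0 T T = T" | "cj0 T F = F" | "cj0 T B = B"
| "cj0 F T = F" | "cj0 F F = F" | "cj0 F B = F"
| "cj0 B T = B" | "cj0 B F = F" | "cj0 B B = B"

fun dj0 :: "tv \<Rightarrow> tv \<Rightarrow> tv" where
  "dj0 T T = T" | "dj0 T F = T" | "dj0 T B = T"
| "dj0 F T = T" | "dj0 F F = F" | "dj0 F B = B"
| "dj0 B T = T" | "dj0 B F = B" | "dj0 B B = B"

fun im0 :: "tv \<Rightarrow> tv \<Rightarrow> tv" where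
  "im0 T y = y" | "im0 F y = T" | "im0 B y = y"

definition L0 :: logic where "L0 = (ng0, cj0, dj0, im0)"

lemma des_cj: "designated (cj0 x y) = (designated x \<and> designated y)"
  by (cases x; cases y) (auto simp: designated_def)
lemma des_dj: "designated (dj0 x y) = (designated x \<or> designated y)"
  by (cases x; cases y) (auto simp: designated_def)
lemma des_im: "designated (im0 x y) = (\<not> designated x \<or> designated y)"
  by (cases x; cases y) (auto simp: designated_def)
lemma notF: "(x = F) = (\<not> designated x)"
  by (cases x) (auto simp: designated_def)

lemma cons_L0: "cons L0 \<Gamma> A = (\<forall>v. (\<exists>A'\<in>\<Gamma>. \<not> designated (eval L0 v A')) \<or> designated (eval L0 v A))"
  unfolding cons_def by (simp add: notF)

lemma ev_L0:
  "eval L0 v (Neg A) = ng0 (eval L0 v A)"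
  "eval L0 v (Conj A C) = cj0 (eval L0 v A) (eval L0 v C)"
  "eval L0 v (Disj A C) = dj0 (eval L0 v A) (eval L0 v C)"
  "eval L0 v (Imp A C) = im0 (eval L0 v A) (eval L0 v C)"
  by (simp_all add: L0_def)

lemma ceval_lemma: "eval L (classical_tv \<circ> w) X = classical_tv (ceval w X)"
  if "agrees_classical L" for L
proof -
  obtain ng cj dj im where L: "L = (ng, cj, dj, im)" by (cases L) auto
  with that have c: "\<And>p q. ng (classical_tv p) = classical_tv (\<not> p)
        \<and> cj (classical_tv p) (classical_tv q) = classical_tv (p \<and> q)
        \<and> dj (classical_tv p) (classical_tv q) = classical_tv (p \<or> q)
        \<and> im (classical_tv p) (classical_tv q) = classical_tv (p \<longrightarrow> q)"
    by (simp add: agrees_classical_def)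
  show ?thesis by (induction X) (simp_all add: L c classical_tv_def[of False])
qed

lemma prop_a_gen: "agrees_classical L \<Longrightarrow> prop_a L"
  unfolding prop_a_def cpl_cons_def cons_def
proof (intro allI impI)
  fix \<Gamma> A w
  assume ag: "agrees_classical L"
    and c: "\<forall>v. (\<exists>A'\<in>\<Gamma>. eval L v A' = F) \<or> designated (eval L v A)"
    and g: "\<forall>A'\<in>\<Gamma>. ceval w A'"
  from c[rule_format, of "classical_tv \<circ> w"] g show "ceval w A"
    by (auto simp: ceval_lemma[OF ag] classical_tv_def designated_def split: if_splits)
qed

lemma ag_L0: "agrees_classical L0"
  unfolding agrees_classical_def L0_def classical_tv_def by auto

lemma exist: "in_class L0 \<and> equiv_laws L0"
proof -
  have pc: "paraconsistent L0"
    unfolding paraconsistent_def cons_def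
    by (rule exI[of _ "Var 0"], rule exI[of _ Bot], auto simp: L0_def designated_def intro!: exI[of _ "\<lambda>_. B"])
  have pb: "prop_b L0"
    unfolding prop_b_def cons_L0 ev_L0 des_cj des_dj des_im by (intro allI conjI iffI; auto simp: ev_L0 des_dj simp del: eval.simps)
  have eq: "equiv_laws L0"
    unfolding equiv_laws_def equiv_fm_def Top_def
  proof (intro allI conjI)
    fix A C D :: fm and v
    let ?a = "eval L0 v A" and ?c = "eval L0 v C" and ?d = "eval L0 v D"
    show "eval L0 v (Conj A Bot) = eval L0 v Bot" by (cases ?a) (simp_all add: L0_def)
    show "eval L0 v (Disj A (Neg Bot)) = eval L0 v (Neg Bot)" by (cases ?a) (simp_all add: L0_def)
    show "eval L0 v (Conj A (Neg Bot)) = eval L0 v A" by (cases ?a) (simp_all add: L0_def)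
    show "eval L0 v (Disj A Bot) = eval L0 v A" by (cases ?a) (simp_all add: L0_def)
    show "eval L0 v (Conj A A) = eval L0 v A" by (cases ?a) (simp_all add: L0_def)
    show "eval L0 v (Disj A A) = eval L0 v A" by (cases ?a) (simp_all add: L0_def)
    show "eval L0 v (Conj A C) = eval L0 v (Conj C A)" by (cases ?a; cases ?c) (simp_all add: L0_def)
    show "eval L0 v (Disj A C) = eval L0 v (Disj C A)" by (cases ?a; cases ?c) (simp_all add: L0_def)
    show "eval L0 v (Neg (Neg A)) = eval L0 v A" by (cases ?a) (simp_all add: L0_def)
    show "eval L0 v (Imp (Disj A (Neg A)) C) = eval L0 v C" by (cases ?a; cases ?c) (simp_all add: L0_def)
    show "eval L0 v (Conj (Imp A C) (Imp A D)) = eval L0 v (Imp A (Conj C D))"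
      by (cases ?a; cases ?c; cases ?d) (simp_all add: L0_def)
    show "eval L0 v (Conj (Imp A D) (Imp C D)) = eval L0 v (Imp (Disj A C) D)"
      by (cases ?a; cases ?c; cases ?d) (simp_all add: L0_def)
  qed
  show ?thesis using pc pb eq ag_L0 prop_a_gen[OF ag_L0] by (simp add: in_class_def)
qed

definition vv :: "tv \<Rightarrow> tv \<Rightarrow> nat \<Rightarrow> tv" where
  "vv x y = (\<lambda>n. if n = 0 then x else y)"

lemma uniq:
  assumes ic: "in_class L" and el: "equiv_laws L"
  shows "L = L0"
proof -
  obtain ng cj dj im where L: "L = (ng, cj, dj, im)" by (cases L) auto
  from ic have c: "\<And>p q. ng (classical_tv p) = classical_tv (\<not> p)
        \<and> cj (classical_tv p) (classical_tv q) = classical_tv (p \<and> q)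
        \<and> dj (classical_tv p) (classical_tv q) = classical_tv (p \<or> q)
        \<and> im (classical_tv p) (classical_tv q) = classical_tv (p \<longrightarrow> q)"
    by (simp add: in_class_def agrees_classical_def L)
  have c1: "ng T = F" "ng F = T" using c[of True True] c[of False False] by (simp_all add: classical_tv_def)
  have c2: "cj T T = T" "cj T F = F" "cj F T = F" "cj F F = F"
    "dj T T = T" "dj T F = T" "dj F T = T" "dj F F = F"
    "im T T = T" "im T F = F" "im F T = T" "im F F = T"
    using c[of True True] c[of True False] c[of False True] c[of False False]
    by (simp_all add: classical_tv_def)
  from ic obtain A C v where "\<not> (\<exists>A'\<in>{A, Neg A}. eval L v A' = F)" and "\<not> designated (eval L v C)"
    by (auto simp: in_class_def paraconsistent_def cons_def)
  then have pcx: "eval L v A \<noteq> F" "ng (eval L v A) \<noteq> F" by (auto simp: L)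
  have nBF: "ng B \<noteq> F" using pcx c1 by (cases "eval L v A") auto
  have law: "\<And>A C D. equiv_fm L (Conj A Bot) Bot
    \<and> equiv_fm L (Disj A Top) Top
    \<and> equiv_fm L (Conj A Top) A
    \<and> equiv_fm L (Disj A Bot) A
    \<and> equiv_fm L (Conj A A) A
    \<and> equiv_fm L (Disj A A) A
    \<and> equiv_fm L (Conj A C) (Conj C A)
    \<and> equiv_fm L (Disj A C) (Disj C A)
    \<and> equiv_fm L (Neg (Neg A)) A
    \<and> equiv_fm L (Imp (Disj A (Neg A)) C) C
    \<and> equiv_fm L (Conj (Imp A C) (Imp A D)) (Imp A (Conj C D))
    \<and> equiv_fm L (Conj (Imp A D) (Imp C D)) (Imp (Disj A C) D)"
    using el unfolding equiv_laws_def by blast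
  have at: "\<And>X Y v. equiv_fm L X Y \<Longrightarrow> eval L v X = eval L v Y" by (simp add: equiv_fm_def)
  have l1: "cj a F = F" for a using at[OF conjunct1[OF law[of "Var 0"]], of "\<lambda>_. a"] by (simp add: L)
  have l2: "dj a T = T" for a using at[of "Disj (Var 0) Top" Top "\<lambda>_. a"] law[of "Var 0"] by (simp add: L Top_def c1)
  have l3: "cj a T = a" for a using at[of "Conj (Var 0) Top" "Var 0" "\<lambda>_. a"] law[of "Var 0"] by (simp add: L Top_def c1)
  have l4: "dj a F = a" for a using at[of "Disj (Var 0) Bot" "Var 0" "\<lambda>_. a"] law[of "Var 0"] by (simp add: L)
  have l5: "cj a a = a" for a using at[of "Conj (Var 0) (Var 0)" "Var 0" "\<lambda>_. a"] law[of "Var 0"] by (simp add: L)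
  have l6: "dj a a = a" for a using at[of "Disj (Var 0) (Var 0)" "Var 0" "\<lambda>_. a"] law[of "Var 0"] by (simp add: L)
  have l7: "cj a b = cj b a" for a b using at[of "Conj (Var 0) (Var 1)" "Conj (Var 1) (Var 0)" "vv a b"] law[of "Var 0" "Var 1"] by (simp add: L vv_def)
  have l8: "dj a b = dj b a" for a b using at[of "Disj (Var 0) (Var 1)" "Disj (Var 1) (Var 0)" "vv a b"] law[of "Var 0" "Var 1"] by (simp add: L vv_def)
  have l9: "ng (ng a) = a" for a using at[of "Neg (Neg (Var 0))" "Var 0" "\<lambda>_. a"] law[of "Var 0"] by (simp add: L)
  have l10: "im (dj a (ng a)) b = b" for a b using at[of "Imp (Disj (Var 0) (Neg (Var 0))) (Var 1)" "Var 1" "vv a b"] law[of "Var 0" "Var 1"] by (simp add: L vv_def)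
  have l11: "cj (im a b) (im a c) = im a (cj b c)" for a b c
    using at[of "Conj (Imp (Var 0) (Var 1)) (Imp (Var 0) (Var 2))" "Imp (Var 0) (Conj (Var 1) (Var 2))" "\<lambda>n. if n = 0 then a else if n = 1 then b else c"]
      law[of "Var 0" "Var 1" "Var 2"] by (simp add: L)
  have "ng (ng B) = B" by (rule l9)
  hence nB: "ng B = B" using nBF c1 by (cases "ng B") auto
  have cjs: "cj B B = B" "cj B T = B" "cj T B = B" "cj B F = F" "cj F B = F"
    using l5[of B] l3[of B] l7[of T B] l1[of B] l7[of F B] by simp_all
  have djs: "dj B B = B" "dj B T = T" "dj T B = T" "dj B F = B" "dj F B = B"
    using l6[of B] l2[of B] l8[of T B] l4[of B] l8[of F B] by simp_all
  have imB: "im B y = y" for y using l10[of B y] nB djs by simp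
  have imT: "im T y = y" for y using l10[of T y] c1 c2 by simp
  have "cj (im F B) T = T" using l11[of F B F] c2 cjs by simp
  hence imFB: "im F B = T" using cjs c2 by (cases "im F B") auto
  have "ng = ng0" by (rule ext, case_tac x) (simp_all add: c1 nB)
  moreover have "cj = cj0" by (rule ext, rule ext, case_tac x; case_tac xa) (simp_all add: c2 cjs)
  moreover have "dj = dj0" by (rule ext, rule ext, case_tac x; case_tac xa) (simp_all add: c2 djs)
  moreover have "im = im0" by (rule ext, rule ext, case_tac x; case_tac xa) (simp_all add: c2 imB imT imFB)
  ultimately show ?thesis by (simp add: L L0_def)
qed

theorem theorem2:
  shows "\<exists>!L. in_class L \<and> equiv_laws L"
  using exist uniq by blast

end
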